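(* Let $V$ be a non-empty measurable subset of $\mathbb R^N$ ($N\ge1$), and let $\beta,\zeta\in C^0(\mathbb R)$ be nondecreasing with $\beta(0)=\zeta(0)=0$. Let $(w_m)_{m\in\mathbb N}$ be measurable functions on $V$ and $\overline\beta,\overline\zeta\in L^2(V)$ such that $\beta(w_m)\to\overline\beta$ and $\zeta(w_m)\to\overline\zeta$ weakly in $L^2(V)$, and such that for some $\varphi\in L^\infty(V)$ with $\varphi>0$ a.e. on $V$, $$\lim_{m\to\infty}\int_V\varphi\,\beta(w_m)\,\zeta(w_m)\,dz=\int_V\varphi\,\overline\beta\,\overline\zeta\,dz.$$ Then for any measurable $w$ on $V$ with $(\beta+\zeta)(w)=\overline\beta+\overline\zeta$ a.e. on $V$, one has $\overline\beta=\beta(w)$ and $\overline\zeta=\zeta(w)$ a.e. on $V$. *)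

theory Defs
  imports "HOL-Analysis.Analysis"
begin

definition L2 :: "'a measure \<Rightarrow> ('a \<Rightarrow> real) \<Rightarrow> bool" where
  "L2 M f \<longleftrightarrow> f \<in> borel_measurable M \<and> integrable M (\<lambda>x. (f x)^2)"

definition Linf :: "'a measure \<Rightarrow> ('a \<Rightarrow> real) \<Rightarrow> bool" where
  "Linf M f \<longleftrightarrow> f \<in> borel_measurable M \<and> (\<exists>C. AE x in M. \<bar>f x\<bar> \<le> C)"

definition weak_L2_conv :: "'a measure \<Rightarrow> (nat \<Rightarrow> 'a \<Rightarrow> real) \<Rightarrow> ('a \<Rightarrow> real) \<Rightarrow> bool" where
  "weak_L2_conv M fs f \<longleftrightarrow> (\<forall>m. L2 M (fs m)) \<and> L2 M f \<and>
     (\<forall>g. L2 M g \<longrightarrow>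
        (\<lambda>m. \<integral>x. fs m x * g x \<partial>M) \<longlonglongrightarrow> (\<integral>x. f x * g x \<partial>M))"

end

theory Submission
  imports Defs
begin

lemma L2_prod_integrable:
  fixes f g :: "'a \<Rightarrow> real"
  assumes "L2 M f" "L2 M g"
  shows "integrable M (\<lambda>x. f x * g x)"
proof (rule Bochner_Integration.integrable_bound[where f="\<lambda>x. (f x)^2 + (g x)^2"])
  show "integrable M (\<lambda>x. (f x)^2 + (g x)^2)" using assms unfolding L2_def by auto
  show "(\<lambda>x. f x * g x) \<in> borel_measurable M" using assms unfolding L2_def by auto
  have "\<And>x. norm (f x * g x) \<le> norm ((f x)^2 + (g x)^2)"
  proof -
    fix x
    have "0 \<le> (\<bar>f x\<bar> - \<bar>g x\<bar>)^2" by simp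
    hence "2 * \<bar>f x\<bar> * \<bar>g x\<bar> \<le> (f x)^2 + (g x)^2"
      by (simp add: power2_eq_square algebra_simps)
    moreover have "\<bar>f x\<bar> * \<bar>g x\<bar> \<ge> 0" by simp
    ultimately have "\<bar>f x\<bar> * \<bar>g x\<bar> \<le> (f x)^2 + (g x)^2" by linarith
    thus "norm (f x * g x) \<le> norm ((f x)^2 + (g x)^2)"
      by (simp add: abs_mult)
  qed
  thus "AE x in M. norm (f x * g x) \<le> norm ((f x)^2 + (g x)^2)" by simp
qed

lemma Linf_L2_mult:
  fixes f \<phi> :: "'a \<Rightarrow> real"
  assumes "Linf M \<phi>" "L2 M f"
  shows "L2 M (\<lambda>x. \<phi> x * f x)"
proof -
  obtain C where C: "AE x in M. \<bar>\<phi> x\<bar> \<le> C" using assms(1) unfolding Linf_def by auto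
  have m: "(\<lambda>x. \<phi> x * f x) \<in> borel_measurable M" using assms unfolding Linf_def L2_def by auto
  have "integrable M (\<lambda>x. (\<phi> x * f x)^2)"
  proof (rule Bochner_Integration.integrable_bound[where f="\<lambda>x. C^2 * (f x)^2"])
    show "integrable M (\<lambda>x. C^2 * (f x)^2)" using assms(2) unfolding L2_def by auto
    show "(\<lambda>x. (\<phi> x * f x)^2) \<in> borel_measurable M" using m by auto
    show "AE x in M. norm ((\<phi> x * f x)^2) \<le> norm (C^2 * (f x)^2)"
      using C
    proof eventually_elim
      case (elim x)
      have "(\<phi> x)^2 \<le> C^2" using elim
        by (metis abs_ge_zero abs_le_square_iff order_trans power2_abs abs_of_nonneg)
      hence "(\<phi> x)^2 * (f x)^2 \<le> C^2 * (f x)^2" by (simp add: mult_right_mono)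
      thus ?case by (simp add: power_mult_distrib)
    qed
  qed
  thus ?thesis using m unfolding L2_def by auto
qed

lemma mono_prod_nonneg:
  fixes \<beta> \<zeta> :: "real \<Rightarrow> real"
  assumes "mono \<beta>" "mono \<zeta>"
  shows "(\<beta> a - \<beta> b) * (\<zeta> a - \<zeta> b) \<ge> 0"
proof (cases "a \<le> b")
  case True
  hence "\<beta> a \<le> \<beta> b" "\<zeta> a \<le> \<zeta> b" using assms by (auto simp: mono_def)
  thus ?thesis by (simp add: mult_nonpos_nonpos)
next
  case False
  hence "\<beta> b \<le> \<beta> a" "\<zeta> b \<le> \<zeta> a" using assms by (auto simp: mono_def)
  thus ?thesis by simp
qed

theorem lemma5p5:
  fixes V :: "(real ^ 'n) set"
    and \<beta> \<zeta> :: "real \<Rightarrow> real"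
    and ws :: "nat \<Rightarrow> real ^ 'n \<Rightarrow> real"
    and \<beta>bar \<zeta>bar \<phi> w :: "real ^ 'n \<Rightarrow> real"
  assumes V_meas: "V \<in> sets lebesgue" and V_ne: "V \<noteq> {}"
    and \<beta>_cont: "continuous_on UNIV \<beta>" and \<beta>_mono: "mono \<beta>" and \<beta>0: "\<beta> 0 = 0"
    and \<zeta>_cont: "continuous_on UNIV \<zeta>" and \<zeta>_mono: "mono \<zeta>" and \<zeta>0: "\<zeta> 0 = 0"
    and ws_meas: "\<And>m. ws m \<in> borel_measurable (lebesgue_on V)"
    and \<beta>bar_L2: "L2 (lebesgue_on V) \<beta>bar" and \<zeta>bar_L2: "L2 (lebesgue_on V) \<zeta>bar"
    and \<beta>_weak: "weak_L2_conv (lebesgue_on V) (\<lambda>m x. \<beta> (ws m x)) \<beta>bar"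
    and \<zeta>_weak: "weak_L2_conv (lebesgue_on V) (\<lambda>m x. \<zeta> (ws m x)) \<zeta>bar"
    and \<phi>_Linf: "Linf (lebesgue_on V) \<phi>"
    and \<phi>_pos: "AE x in lebesgue_on V. \<phi> x > 0"
    and lim: "(\<lambda>m. \<integral>x. \<phi> x * \<beta> (ws m x) * \<zeta> (ws m x) \<partial>lebesgue_on V)
               \<longlonglongrightarrow> (\<integral>x. \<phi> x * \<beta>bar x * \<zeta>bar x \<partial>lebesgue_on V)"
    and w_meas: "w \<in> borel_measurable (lebesgue_on V)"
    and w_eq: "AE x in lebesgue_on V. \<beta> (w x) + \<zeta> (w x) = \<beta>bar x + \<zeta>bar x"
  shows "(AE x in lebesgue_on V. \<beta>bar x = \<beta> (w x)) \<and> (AE x in lebesgue_on V. \<zeta>bar x = \<zeta> (w x))"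
proof -
  let ?M = "lebesgue_on V"
  define b where "b = (\<lambda>x. \<beta> (w x))"
  define z where "z = (\<lambda>x. \<zeta> (w x))"
  define bm where "bm = (\<lambda>m x. \<beta> (ws m x))"
  define zm where "zm = (\<lambda>m x. \<zeta> (ws m x))"
  have bmeas: "b \<in> borel_measurable ?M" unfolding b_def
    using borel_measurable_continuous_on[OF \<beta>_cont w_meas] .
  have zmeas: "z \<in> borel_measurable ?M" unfolding z_def
    using borel_measurable_continuous_on[OF \<zeta>_cont w_meas] .
  have sgn: "\<bar>b x\<bar> \<le> \<bar>b x + z x\<bar>" "\<bar>z x\<bar> \<le> \<bar>b x + z x\<bar>" for x
  proof -
    have "(0 \<le> b x \<and> 0 \<le> z x) \<or> (b x \<le> 0 \<and> z x \<le> 0)"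
    proof (cases "0 \<le> w x")
      case True thus ?thesis using \<beta>_mono \<zeta>_mono \<beta>0 \<zeta>0 unfolding b_def z_def mono_def by metis
    next
      case False hence "w x \<le> 0" by simp
      thus ?thesis using \<beta>_mono \<zeta>_mono \<beta>0 \<zeta>0 unfolding b_def z_def mono_def by metis
    qed
    thus "\<bar>b x\<bar> \<le> \<bar>b x + z x\<bar>" "\<bar>z x\<bar> \<le> \<bar>b x + z x\<bar>" by auto
  qed
  have sumL2: "integrable ?M (\<lambda>x. (\<beta>bar x + \<zeta>bar x)^2)"
  proof -
    have "integrable ?M (\<lambda>x. (\<beta>bar x)^2 + (\<zeta>bar x)^2 + 2 * (\<beta>bar x * \<zeta>bar x))"
      using \<beta>bar_L2 \<zeta>bar_L2 L2_prod_integrable[OF \<beta>bar_L2 \<zeta>bar_L2] unfolding L2_def by auto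
    thus ?thesis by (simp add: power2_sum mult.assoc)
  qed
  have bL2: "L2 ?M b" and zL2: "L2 ?M z"
  proof -
    have "integrable ?M (\<lambda>x. (b x)^2)"
    proof (rule Bochner_Integration.integrable_bound[OF sumL2])
      show "(\<lambda>x. (b x)^2) \<in> borel_measurable ?M" using bmeas by auto
      show "AE x in ?M. norm ((b x)^2) \<le> norm ((\<beta>bar x + \<zeta>bar x)^2)"
        using w_eq
      proof eventually_elim
        case (elim x)
        have "(b x)^2 \<le> (b x + z x)^2" using sgn(1)[of x] abs_le_square_iff by blast
        thus ?case using elim by (simp add: b_def z_def)
      qed
    qed
    thus "L2 ?M b" using bmeas unfolding L2_def by auto
    have "integrable ?M (\<lambda>x. (z x)^2)"
    proof (rule Bochner_Integration.integrable_bound[OF sumL2])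
      show "(\<lambda>x. (z x)^2) \<in> borel_measurable ?M" using zmeas by auto
      show "AE x in ?M. norm ((z x)^2) \<le> norm ((\<beta>bar x + \<zeta>bar x)^2)"
        using w_eq
      proof eventually_elim
        case (elim x)
        have "(z x)^2 \<le> (b x + z x)^2" using sgn(2)[of x] abs_le_square_iff by blast
        thus ?case using elim by (simp add: b_def z_def)
      qed
    qed
    thus "L2 ?M z" using zmeas unfolding L2_def by auto
  qed
  have bmL2: "L2 ?M (bm m)" for m using \<beta>_weak unfolding weak_L2_conv_def bm_def by auto
  have zmL2: "L2 ?M (zm m)" for m using \<zeta>_weak unfolding weak_L2_conv_def zm_def by auto
  have pbL2: "L2 ?M (\<lambda>x. \<phi> x * b x)" by (rule Linf_L2_mult[OF \<phi>_Linf bL2])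
  have pzL2: "L2 ?M (\<lambda>x. \<phi> x * z x)" by (rule Linf_L2_mult[OF \<phi>_Linf zL2])
  have pbmL2: "L2 ?M (\<lambda>x. \<phi> x * bm m x)" for m by (rule Linf_L2_mult[OF \<phi>_Linf bmL2])
  have pbbarL2: "L2 ?M (\<lambda>x. \<phi> x * \<beta>bar x)" by (rule Linf_L2_mult[OF \<phi>_Linf \<beta>bar_L2])
  have c1: "(\<lambda>m. \<integral>x. bm m x * (\<phi> x * z x) \<partial>?M) \<longlonglongrightarrow> (\<integral>x. \<beta>bar x * (\<phi> x * z x) \<partial>?M)"
    using \<beta>_weak pzL2 unfolding weak_L2_conv_def bm_def by auto
  have c2: "(\<lambda>m. \<integral>x. zm m x * (\<phi> x * b x) \<partial>?M) \<longlonglongrightarrow> (\<integral>x. \<zeta>bar x * (\<phi> x * b x) \<partial>?M)"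
    using \<zeta>_weak pbL2 unfolding weak_L2_conv_def zm_def by auto
  have c0: "(\<lambda>m. \<integral>x. \<phi> x * bm m x * zm m x \<partial>?M) \<longlonglongrightarrow> (\<integral>x. \<phi> x * \<beta>bar x * \<zeta>bar x \<partial>?M)"
    using lim unfolding bm_def zm_def .
  define I where "I = (\<lambda>m. \<integral>x. \<phi> x * (bm m x - b x) * (zm m x - z x) \<partial>?M)"
  define L where "L = (\<integral>x. \<phi> x * (\<beta>bar x - b x) * (\<zeta>bar x - z x) \<partial>?M)"
  have i1: "integrable ?M (\<lambda>x. \<phi> x * bm m x * zm m x)" for m
    using L2_prod_integrable[OF pbmL2 zmL2] by (simp add: mult.assoc)
  have i2: "integrable ?M (\<lambda>x. bm m x * (\<phi> x * z x))" for m
    using L2_prod_integrable[OF bmL2 pzL2] .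
  have i3: "integrable ?M (\<lambda>x. zm m x * (\<phi> x * b x))" for m
    using L2_prod_integrable[OF zmL2 pbL2] .
  have i4: "integrable ?M (\<lambda>x. \<phi> x * b x * z x)"
    using L2_prod_integrable[OF pbL2 zL2] .
  have j1: "integrable ?M (\<lambda>x. \<phi> x * \<beta>bar x * \<zeta>bar x)"
    using L2_prod_integrable[OF pbbarL2 \<zeta>bar_L2] .
  have j2: "integrable ?M (\<lambda>x. \<beta>bar x * (\<phi> x * z x))"
    using L2_prod_integrable[OF \<beta>bar_L2 pzL2] .
  have j3: "integrable ?M (\<lambda>x. \<zeta>bar x * (\<phi> x * b x))"
    using L2_prod_integrable[OF \<zeta>bar_L2 pbL2] .
  have Ieq: "I m = (\<integral>x. \<phi> x * bm m x * zm m x \<partial>?M) - (\<integral>x. bm m x * (\<phi> x * z x) \<partial>?M)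
      - (\<integral>x. zm m x * (\<phi> x * b x) \<partial>?M) + (\<integral>x. \<phi> x * b x * z x \<partial>?M)" for m
  proof -
    have "I m = (\<integral>x. ((\<phi> x * bm m x * zm m x - bm m x * (\<phi> x * z x))
        - zm m x * (\<phi> x * b x)) + \<phi> x * b x * z x \<partial>?M)"
      unfolding I_def by (rule Bochner_Integration.integral_cong) (auto simp: algebra_simps)
    thus ?thesis
      using i1[of m] i2[of m] i3[of m] i4 by simp
  qed
  have Leq: "L = (\<integral>x. \<phi> x * \<beta>bar x * \<zeta>bar x \<partial>?M) - (\<integral>x. \<beta>bar x * (\<phi> x * z x) \<partial>?M)
      - (\<integral>x. \<zeta>bar x * (\<phi> x * b x) \<partial>?M) + (\<integral>x. \<phi> x * b x * z x \<partial>?M)"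
  proof -
    have "L = (\<integral>x. ((\<phi> x * \<beta>bar x * \<zeta>bar x - \<beta>bar x * (\<phi> x * z x))
        - \<zeta>bar x * (\<phi> x * b x)) + \<phi> x * b x * z x \<partial>?M)"
      unfolding L_def by (rule Bochner_Integration.integral_cong) (auto simp: algebra_simps)
    thus ?thesis
      using j1 j2 j3 i4 by simp
  qed
  have "I \<longlonglongrightarrow> L"
    unfolding Ieq[abs_def] Leq
    by (intro tendsto_intros c0 c1 c2)
  moreover have "I m \<ge> 0" for m
    unfolding I_def
  proof (rule integral_nonneg_AE)
    show "AE x in ?M. 0 \<le> \<phi> x * (bm m x - b x) * (zm m x - z x)"
      using \<phi>_pos
    proof eventually_elim
      case (elim x)
      have "0 \<le> (bm m x - b x) * (zm m x - z x)"
        unfolding bm_def b_def zm_def z_def by (rule mono_prod_nonneg[OF \<beta>_mono \<zeta>_mono])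
      thus ?case using elim by (simp add: mult.assoc)
    qed
  qed
  ultimately have L0: "L \<ge> 0" by (intro LIMSEQ_le_const) auto
  define D where "D = (\<lambda>x. \<phi> x * (\<beta>bar x - b x)^2)"
  have "L = (\<integral>x. - D x \<partial>?M)"
    unfolding L_def
  proof (rule integral_cong_AE)
    show "(\<lambda>x. \<phi> x * (\<beta>bar x - b x) * (\<zeta>bar x - z x)) \<in> borel_measurable ?M"
      using \<phi>_Linf \<beta>bar_L2 \<zeta>bar_L2 bmeas zmeas unfolding Linf_def L2_def by auto
    show "(\<lambda>x. - D x) \<in> borel_measurable ?M"
      using \<phi>_Linf \<beta>bar_L2 bmeas unfolding Linf_def L2_def D_def by auto
    show "AE x in ?M. \<phi> x * (\<beta>bar x - b x) * (\<zeta>bar x - z x) = - D x"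
      using w_eq
    proof eventually_elim
      case (elim x)
      hence e: "\<zeta>bar x - z x = - (\<beta>bar x - b x)" by (simp add: b_def z_def)
      show ?case unfolding D_def power2_eq_square e by (simp only: mult_minus_right mult.assoc)
    qed
  qed
  hence DL: "(\<integral>x. D x \<partial>?M) = - L" by simp
  have Dint: "integrable ?M D"
  proof -
    have "integrable ?M (\<lambda>x. \<phi> x * (\<beta>bar x - b x) * (\<beta>bar x - b x))"
    proof -
      have "L2 ?M (\<lambda>x. \<beta>bar x - b x)"
      proof -
        have "integrable ?M (\<lambda>x. (\<beta>bar x)^2 + (b x)^2 - 2 * (\<beta>bar x * b x))"
          using \<beta>bar_L2 bL2 L2_prod_integrable[OF \<beta>bar_L2 bL2] unfolding L2_def by auto
        hence "integrable ?M (\<lambda>x. (\<beta>bar x - b x)^2)" by (simp add: power2_diff mult.assoc)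
        thus ?thesis using \<beta>bar_L2 bmeas unfolding L2_def by auto
      qed
      from L2_prod_integrable[OF Linf_L2_mult[OF \<phi>_Linf this] this] show ?thesis .
    qed
    thus ?thesis unfolding D_def by (simp add: power2_eq_square mult.assoc)
  qed
  have Dnn: "AE x in ?M. 0 \<le> D x" using \<phi>_pos by eventually_elim (simp add: D_def)
  have "(\<integral>x. D x \<partial>?M) \<ge> 0" using integral_nonneg_AE[OF Dnn] .
  with DL L0 have "(\<integral>x. D x \<partial>?M) = 0" by simp
  hence "AE x in ?M. D x = 0" using integral_nonneg_eq_0_iff_AE[OF Dint Dnn] by simp
  hence A: "AE x in ?M. \<beta>bar x = \<beta> (w x)"
    using \<phi>_pos by eventually_elim (simp add: D_def b_def)
  have B: "AE x in ?M. \<zeta>bar x = \<zeta> (w x)"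
    using A w_eq by eventually_elim simp
  show ?thesis using A B by simp
qed

end
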